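(* Let $K$ be a field with $\operatorname{char} K\neq 2$, $R=K[x_1,\dots,x_6]$ and $I=(x_1x_3,\ x_1x_4,\ x_1x_6,\ x_2x_4,\ x_2x_5,\ x_2x_6,\ x_3x_5,\ x_3x_6,\ x_4x_5x_6)$. Then $$I=\sqrt{(x_1x_4+x_3x_5,\ x_1x_3+x_2x_6+x_4x_5x_6,\ x_1x_6+x_2x_5,\ x_2x_4+x_3x_6)}.$$ *)

theory Defs
  imports Main "HOL-Library.Poly_Mapping" "HOL-Library.Numeral_Type"
begin

text \<open>The variable x_(i+1) of the paper is X i, for i = 0,...,5.\<close>

type_synonym 'a mpoly6 = "(6 \<Rightarrow>\<^sub>0 nat) \<Rightarrow>\<^sub>0 'a"

definition X :: "6 \<Rightarrow> 'a::comm_ring_1 mpoly6" where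
  "X i = Poly_Mapping.single (Poly_Mapping.single i 1) 1"

definition is_ideal :: "'r::comm_ring_1 set \<Rightarrow> bool" where
  "is_ideal I \<longleftrightarrow> 0 \<in> I \<and> (\<forall>a\<in>I. \<forall>b\<in>I. a + b \<in> I) \<and> (\<forall>r. \<forall>a\<in>I. r * a \<in> I)"

definition ideal_gen :: "'r::comm_ring_1 set \<Rightarrow> 'r set" where
  "ideal_gen S = \<Inter>{I. is_ideal I \<and> S \<subseteq> I}"

definition radical :: "'r::comm_ring_1 set \<Rightarrow> 'r set" where
  "radical I = {f. \<exists>n::nat. f ^ n \<in> I}"

end

theory Submission
  imports Defs
begin

lemma ideal_gen_ideal: "is_ideal (ideal_gen S)"
  unfolding ideal_gen_def is_ideal_def by blast

lemma ideal_gen_sub: "S \<subseteq> ideal_gen S"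
  unfolding ideal_gen_def by blast

lemma ideal_gen_least: "is_ideal I \<Longrightarrow> S \<subseteq> I \<Longrightarrow> ideal_gen S \<subseteq> I"
  unfolding ideal_gen_def by blast

lemma ideal_0: "is_ideal I \<Longrightarrow> 0 \<in> I"
  unfolding is_ideal_def by blast

lemma ideal_add: "is_ideal I \<Longrightarrow> a \<in> I \<Longrightarrow> b \<in> I \<Longrightarrow> a + b \<in> I"
  unfolding is_ideal_def by blast

lemma ideal_mult: "is_ideal I \<Longrightarrow> a \<in> I \<Longrightarrow> r * a \<in> I"
  unfolding is_ideal_def by blast

lemma ideal_mult2: "is_ideal I \<Longrightarrow> a \<in> I \<Longrightarrow> a * r \<in> I"
  using ideal_mult[of I a r] by (simp add: mult.commute)

lemma ideal_neg: "is_ideal I \<Longrightarrow> a \<in> I \<Longrightarrow> - a \<in> I"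
  using ideal_mult[of I a "-1"] by simp

lemma ideal_diff: "is_ideal I \<Longrightarrow> a \<in> I \<Longrightarrow> b \<in> I \<Longrightarrow> a - b \<in> I"
  using ideal_add[of I a "- b"] ideal_neg[of I b] by simp

lemma ideal_sum:
  assumes "is_ideal I" "finite A" "\<And>x. x \<in> A \<Longrightarrow> f x \<in> I"
  shows "sum f A \<in> I"
  using assms(2,3)
proof (induction A rule: finite_induct)
  case empty then show ?case using assms(1) by (simp add: ideal_0)
next
  case (insert x F) then show ?case using assms(1) by (simp add: ideal_add)
qed

lemma radical_ideal:
  assumes I: "is_ideal I"
  shows "is_ideal (radical I)"
  unfolding is_ideal_def
proof (intro conjI ballI allI)
  show "0 \<in> radical I" unfolding radical_def
    using ideal_0[OF I] by (intro CollectI exI[of _ 1]) simp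
next
  fix r a assume "a \<in> radical I"
  then obtain n where "a ^ n \<in> I" unfolding radical_def by blast
  then have "(r * a) ^ n \<in> I" using ideal_mult[OF I] by (simp add: power_mult_distrib)
  then show "r * a \<in> radical I" unfolding radical_def by blast
next
  fix a b assume "a \<in> radical I" "b \<in> radical I"
  then obtain m n where am: "a ^ m \<in> I" and bn: "b ^ n \<in> I" unfolding radical_def by blast
  have "(a + b) ^ (m + n) = (\<Sum>k\<le>m + n. of_nat (m + n choose k) * a ^ k * b ^ (m + n - k))"
    by (rule binomial_ring)
  also have "\<dots> \<in> I"
  proof (rule ideal_sum[OF I], simp, goal_cases)
    case (1 k)
    show ?case
    proof (cases "m \<le> k")
      case True
      then have "a ^ k = a ^ m * a ^ (k - m)" by (simp add: power_add[symmetric])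
      then show ?thesis using ideal_mult[OF I am]
        by (metis ideal_mult2[OF I] mult.commute)
    next
      case False
      then have "b ^ (m + n - k) = b ^ n * b ^ (m + n - k - n)" by (simp add: power_add[symmetric] add.commute)
      then show ?thesis using ideal_mult[OF I bn, of "of_nat (m + n choose k) * a ^ k * b ^ (m + n - k - n)"]
        by (simp add: ac_simps)
    qed
  qed
  finally show "a + b \<in> radical I" unfolding radical_def by blast
qed

lemma radical_mono: "I \<subseteq> J \<Longrightarrow> radical I \<subseteq> radical J"
  unfolding radical_def by blast

lemma sub_radical: "I \<subseteq> radical I"
  unfolding radical_def by (auto intro: exI[of _ 1])

definition Ed :: "6 set set" where
  "Ed = {{0,2},{0,3},{0,5},{1,3},{1,4},{1,5},{2,4},{2,5},{3,4,5}}"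

definition bad :: "(6 \<Rightarrow>\<^sub>0 nat) \<Rightarrow> bool" where
  "bad m \<longleftrightarrow> (\<forall>e\<in>Ed. \<not> e \<subseteq> Poly_Mapping.keys m)"

definition Qs :: "'a::comm_ring_1 mpoly6 set" where
  "Qs = {g. \<forall>m\<in>Poly_Mapping.keys g. \<not> bad m}"

lemma keys_add_nat: "Poly_Mapping.keys (a + b :: 6 \<Rightarrow>\<^sub>0 nat) = Poly_Mapping.keys a \<union> Poly_Mapping.keys b"
  by (auto simp: in_keys_iff lookup_add)

lemma keys_single1: "Poly_Mapping.keys (Poly_Mapping.single i (1::nat)) = {i}"
  by simp

lemma bad_mono: "Poly_Mapping.keys m \<subseteq> Poly_Mapping.keys m' \<Longrightarrow> bad m' \<Longrightarrow> bad m"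
  unfolding bad_def by blast

lemma Qs_ideal: "is_ideal (Qs :: 'a::comm_ring_1 mpoly6 set)"
  unfolding is_ideal_def
proof (intro conjI ballI allI)
  show "0 \<in> (Qs :: 'a mpoly6 set)" unfolding Qs_def by simp
next
  fix a b :: "'a mpoly6" assume "a \<in> Qs" "b \<in> Qs"
  then show "a + b \<in> Qs" unfolding Qs_def using keys_add[of a b] by blast
next
  fix r a :: "'a mpoly6" assume a: "a \<in> Qs"
  show "r * a \<in> Qs" unfolding Qs_def
  proof (intro CollectI ballI notI)
    fix m assume "m \<in> Poly_Mapping.keys (r * a)" "bad m"
    then obtain x y where "m = x + y" "y \<in> Poly_Mapping.keys a"
      using keys_mult[of r a] by blast
    moreover have "bad y"
      using \<open>bad m\<close> \<open>m = x + y\<close> by (intro bad_mono[of y m]) (simp add: keys_add_nat)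
    ultimately show False using a unfolding Qs_def by blast
  qed
qed

lemma X_mult: "X i * X j = Poly_Mapping.single (Poly_Mapping.single i 1 + Poly_Mapping.single j 1) (1::'a::comm_ring_1)"
  unfolding X_def by (simp add: mult_single)

lemma X_mult3: "X i * X j * X k = Poly_Mapping.single (Poly_Mapping.single i 1 + Poly_Mapping.single j 1 + Poly_Mapping.single k 1) (1::'a::comm_ring_1)"
  unfolding X_def by (simp add: mult_single)

lemma gens_Qs: "{X 0 * X 2, X 0 * X 3, X 0 * X 5, X 1 * X 3, X 1 * X 4, X 1 * X 5,
                    X 2 * X 4, X 2 * X 5, X 3 * X 4 * X 5} \<subseteq> (Qs :: 'a::comm_ring_1 mpoly6 set)"
  unfolding Qs_def
  apply (simp only: X_mult3)
  apply (simp add: X_mult keys_add_nat bad_def Ed_def)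
  done

lemma split_mono:
  assumes "i \<in> Poly_Mapping.keys (m :: 6 \<Rightarrow>\<^sub>0 nat)"
  shows "\<exists>m'. m = m' + Poly_Mapping.single i 1 \<and> Poly_Mapping.keys m - {i} \<subseteq> Poly_Mapping.keys m'"
proof (intro exI conjI)
  let ?m' = "m - Poly_Mapping.single i 1"
  have "Poly_Mapping.lookup m i \<ge> 1" using assms by (simp add: in_keys_iff)
  then show "m = ?m' + Poly_Mapping.single i 1"
    by (intro poly_mapping_eqI) (auto simp: lookup_add lookup_minus lookup_single when_def)
  show "Poly_Mapping.keys m - {i} \<subseteq> Poly_Mapping.keys ?m'"
    by (auto simp: in_keys_iff lookup_minus lookup_single when_def split: if_splits)
qed

lemma good_term2:
  fixes S :: "'a::comm_ring_1 mpoly6 set"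
  assumes "X i * X j \<in> S" "i \<noteq> j" "{i, j} \<subseteq> Poly_Mapping.keys m"
  shows "Poly_Mapping.single m c \<in> ideal_gen S"
proof -
  obtain m1 where m1: "m = m1 + Poly_Mapping.single i 1" "Poly_Mapping.keys m - {i} \<subseteq> Poly_Mapping.keys m1"
    using split_mono[of i m] assms by auto
  then have "j \<in> Poly_Mapping.keys m1" using assms by auto
  then obtain m2 where m2: "m1 = m2 + Poly_Mapping.single j 1"
    using split_mono[of j m1] by auto
  have eq: "m = m2 + (Poly_Mapping.single i 1 + Poly_Mapping.single j 1)"
    by (simp add: m1 m2 ac_simps)
  have "Poly_Mapping.single m c = Poly_Mapping.single m2 c * Poly_Mapping.single (Poly_Mapping.single i 1 + Poly_Mapping.single j 1) 1"
    by (simp only: mult_single eq mult_1_right)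
  then have "Poly_Mapping.single m c = Poly_Mapping.single m2 c * (X i * X j)"
    by (simp only: X_mult)
  then show ?thesis
    using ideal_mult[OF ideal_gen_ideal, of "X i * X j" S] ideal_gen_sub[of S] assms(1) by auto
qed

lemma good_term3:
  fixes S :: "'a::comm_ring_1 mpoly6 set"
  assumes "X i * X j * X k \<in> S" "i \<noteq> j" "i \<noteq> k" "j \<noteq> k" "{i, j, k} \<subseteq> Poly_Mapping.keys m"
  shows "Poly_Mapping.single m c \<in> ideal_gen S"
proof -
  obtain m1 where m1: "m = m1 + Poly_Mapping.single i 1" "Poly_Mapping.keys m - {i} \<subseteq> Poly_Mapping.keys m1"
    using split_mono[of i m] assms by auto
  then have "j \<in> Poly_Mapping.keys m1" using assms by auto
  then obtain m2 where m2: "m1 = m2 + Poly_Mapping.single j 1" "Poly_Mapping.keys m1 - {j} \<subseteq> Poly_Mapping.keys m2"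
    using split_mono[of j m1] by auto
  then have "k \<in> Poly_Mapping.keys m2" using assms m1 by auto
  then obtain m3 where m3: "m2 = m3 + Poly_Mapping.single k 1"
    using split_mono[of k m2] by auto
  have eq: "m = m3 + (Poly_Mapping.single i 1 + Poly_Mapping.single j 1 + Poly_Mapping.single k 1)"
    by (simp add: m1 m2 m3 ac_simps)
  have "Poly_Mapping.single m c = Poly_Mapping.single m3 c * Poly_Mapping.single (Poly_Mapping.single i 1 + Poly_Mapping.single j 1 + Poly_Mapping.single k 1) 1"
    by (simp only: mult_single eq mult_1_right)
  then have "Poly_Mapping.single m c = Poly_Mapping.single m3 c * (X i * X j * X k)"
    by (simp only: X_mult3)
  then show ?thesis
    using ideal_mult[OF ideal_gen_ideal, of "X i * X j * X k" S] ideal_gen_sub[of S] assms(1) by auto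
qed

lemma good_term:
  assumes "\<not> bad m"
  shows "Poly_Mapping.single m c \<in> ideal_gen {X 0 * X 2, X 0 * X 3, X 0 * X 5, X 1 * X 3, X 1 * X 4, X 1 * X 5,
                    X 2 * X 4, X 2 * X 5, X 3 * X 4 * X 5 :: 'a::comm_ring_1 mpoly6}"
proof -
  obtain e where e: "e \<in> Ed" "e \<subseteq> Poly_Mapping.keys m" using assms unfolding bad_def by blast
  then have "e = {0, 2} \<or> e = {0, 3} \<or> e = {0, 5} \<or> e = {1, 3} \<or> e = {1, 4} \<or> e = {1, 5} \<or> e = {2, 4} \<or> e = {2, 5} \<or> e = {3, 4, 5}"
    by (simp add: Ed_def)
  then show ?thesis
  proof (elim disjE)
    assume "e = {0, 2}" then show ?thesis using e by (intro good_term2[of 0 2]) auto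
  next
    assume "e = {0, 3}" then show ?thesis using e by (intro good_term2[of 0 3]) auto
  next
    assume "e = {0, 5}" then show ?thesis using e by (intro good_term2[of 0 5]) auto
  next
    assume "e = {1, 3}" then show ?thesis using e by (intro good_term2[of 1 3]) auto
  next
    assume "e = {1, 4}" then show ?thesis using e by (intro good_term2[of 1 4]) auto
  next
    assume "e = {1, 5}" then show ?thesis using e by (intro good_term2[of 1 5]) auto
  next
    assume "e = {2, 4}" then show ?thesis using e by (intro good_term2[of 2 4]) auto
  next
    assume "e = {2, 5}" then show ?thesis using e by (intro good_term2[of 2 5]) auto
  next
    assume "e = {3, 4, 5}" then show ?thesis using e by (intro good_term3[of 3 4 5]) auto
  qed
qed
section \<open>Leading monomials\<close>

lemma lead_split:
  fixes p :: "'a::comm_ring_1 mpoly6"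
  assumes "p \<noteq> 0"
  shows "p = Poly_Mapping.single (Max (Poly_Mapping.keys p)) (Poly_Mapping.lookup p (Max (Poly_Mapping.keys p)))
            + (p - Poly_Mapping.single (Max (Poly_Mapping.keys p)) (Poly_Mapping.lookup p (Max (Poly_Mapping.keys p))))"
    and "\<forall>x\<in>Poly_Mapping.keys (p - Poly_Mapping.single (Max (Poly_Mapping.keys p)) (Poly_Mapping.lookup p (Max (Poly_Mapping.keys p)))).
            x < Max (Poly_Mapping.keys p)"
proof -
  show "p = Poly_Mapping.single (Max (Poly_Mapping.keys p)) (Poly_Mapping.lookup p (Max (Poly_Mapping.keys p)))
            + (p - Poly_Mapping.single (Max (Poly_Mapping.keys p)) (Poly_Mapping.lookup p (Max (Poly_Mapping.keys p))))"
    by simp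
  show "\<forall>x\<in>Poly_Mapping.keys (p - Poly_Mapping.single (Max (Poly_Mapping.keys p)) (Poly_Mapping.lookup p (Max (Poly_Mapping.keys p)))).
            x < Max (Poly_Mapping.keys p)"
  proof
    fix x assume x: "x \<in> Poly_Mapping.keys (p - Poly_Mapping.single (Max (Poly_Mapping.keys p)) (Poly_Mapping.lookup p (Max (Poly_Mapping.keys p))))"
    then have "x \<noteq> Max (Poly_Mapping.keys p)"
      by (auto simp: in_keys_iff lookup_minus lookup_single)
    moreover have "x \<in> Poly_Mapping.keys p"
      using x by (auto simp: in_keys_iff lookup_minus lookup_single when_def split: if_splits)
    then have "x \<le> Max (Poly_Mapping.keys p)" by simp
    ultimately show "x < Max (Poly_Mapping.keys p)" by simp
  qed
qed

lemma lead_mult: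
  fixes p q :: "'a::field mpoly6"
  assumes p: "p \<noteq> 0" and q: "q \<noteq> 0"
  shows "Max (Poly_Mapping.keys (p * q)) = Max (Poly_Mapping.keys p) + Max (Poly_Mapping.keys q)"
proof -
  define Mp where "Mp = Max (Poly_Mapping.keys p)"
  define Mq where "Mq = Max (Poly_Mapping.keys q)"
  define cp where "cp = Poly_Mapping.lookup p Mp"
  define cq where "cq = Poly_Mapping.lookup q Mq"
  define p' where "p' = p - Poly_Mapping.single Mp cp"
  define q' where "q' = q - Poly_Mapping.single Mq cq"
  have Mpk: "Mp \<in> Poly_Mapping.keys p" unfolding Mp_def using p by simp
  have Mqk: "Mq \<in> Poly_Mapping.keys q" unfolding Mq_def using q by simp
  have cp0: "cp \<noteq> 0" using Mpk unfolding cp_def by (simp add: in_keys_iff)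
  have cq0: "cq \<noteq> 0" using Mqk unfolding cq_def by (simp add: in_keys_iff)
  have pe: "p = Poly_Mapping.single Mp cp + p'" and p'lt: "\<forall>x\<in>Poly_Mapping.keys p'. x < Mp"
    using lead_split[OF p] unfolding p'_def cp_def Mp_def by auto
  have qe: "q = Poly_Mapping.single Mq cq + q'" and q'lt: "\<forall>x\<in>Poly_Mapping.keys q'. x < Mq"
    using lead_split[OF q] unfolding q'_def cq_def Mq_def by auto
  have "p * q = Poly_Mapping.single (Mp + Mq) (cp * cq) + (Poly_Mapping.single Mp cp * q' + p' * q)"
  proof -
    have "p * q = Poly_Mapping.single Mp cp * q + p' * q"
      by (subst pe) (simp add: distrib_right)
    also have "Poly_Mapping.single Mp cp * q = Poly_Mapping.single Mp cp * Poly_Mapping.single Mq cq + Poly_Mapping.single Mp cp * q'"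
      by (subst qe) (simp add: distrib_left)
    finally show ?thesis by (simp add: mult_single add.assoc)
  qed
  moreover have "Poly_Mapping.lookup (Poly_Mapping.single Mp cp * q' + p' * q) (Mp + Mq) = 0"
  proof -
    have "Mp + Mq \<notin> Poly_Mapping.keys (Poly_Mapping.single Mp cp * q')"
    proof
      assume "Mp + Mq \<in> Poly_Mapping.keys (Poly_Mapping.single Mp cp * q')"
      then obtain a b where "Mp + Mq = a + b" "a \<in> Poly_Mapping.keys (Poly_Mapping.single Mp cp)" "b \<in> Poly_Mapping.keys q'"
        using keys_mult by blast
      then have "a = Mp" "b < Mq" using q'lt cp0 by auto
      then have "a + b < Mp + Mq" by (simp add: add_strict_left_mono)
      then show False using \<open>Mp + Mq = a + b\<close> by simp
    qed
    moreover have "Mp + Mq \<notin> Poly_Mapping.keys (p' * q)"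
    proof
      assume "Mp + Mq \<in> Poly_Mapping.keys (p' * q)"
      then obtain a b where "Mp + Mq = a + b" "a \<in> Poly_Mapping.keys p'" "b \<in> Poly_Mapping.keys q"
        using keys_mult by blast
      then have "a < Mp" "b \<le> Mq" using p'lt unfolding Mq_def by auto
      then have "a + b < Mp + Mq" by (simp add: add_less_le_mono)
      then show False using \<open>Mp + Mq = a + b\<close> by simp
    qed
    ultimately show ?thesis by (simp add: in_keys_iff lookup_add)
  qed
  ultimately have "Poly_Mapping.lookup (p * q) (Mp + Mq) = cp * cq"
    by (simp add: lookup_add)
  then have inK: "Mp + Mq \<in> Poly_Mapping.keys (p * q)" using cp0 cq0 by (simp add: in_keys_iff)
  have le: "\<forall>x\<in>Poly_Mapping.keys (p * q). x \<le> Mp + Mq"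
  proof
    fix x assume "x \<in> Poly_Mapping.keys (p * q)"
    then obtain a b where "x = a + b" "a \<in> Poly_Mapping.keys p" "b \<in> Poly_Mapping.keys q"
      using keys_mult by blast
    then have "a \<le> Mp" "b \<le> Mq" unfolding Mp_def Mq_def by auto
    then show "x \<le> Mp + Mq" using \<open>x = a + b\<close> by (simp add: add_mono)
  qed
  show ?thesis unfolding Mp_def[symmetric] Mq_def[symmetric]
    using inK le by (intro Max_eqI) auto
qed

lemma lead_pow:
  fixes p :: "'a::field mpoly6"
  assumes p: "p \<noteq> 0"
  shows "Poly_Mapping.keys (Max (Poly_Mapping.keys (p ^ k))) \<subseteq> Poly_Mapping.keys (Max (Poly_Mapping.keys p))"
proof (induction k)
  case 0 then show ?case by simp
next
  case (Suc k)
  have "p ^ k \<noteq> 0" using p by simp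
  then have "Max (Poly_Mapping.keys (p ^ Suc k)) = Max (Poly_Mapping.keys p) + Max (Poly_Mapping.keys (p ^ k))"
    using lead_mult[OF p] by simp
  then show ?case using Suc by (simp add: keys_add_nat)
qed
section \<open>The monomial ideal is radical\<close>

definition Igens :: "'a::comm_ring_1 mpoly6 set" where
  "Igens = {X 0 * X 2, X 0 * X 3, X 0 * X 5, X 1 * X 3, X 1 * X 4, X 1 * X 5,
                    X 2 * X 4, X 2 * X 5, X 3 * X 4 * X 5}"

definition Jgens :: "'a::comm_ring_1 mpoly6 set" where
  "Jgens = {X 0 * X 3 + X 2 * X 4,
                             X 0 * X 2 + X 1 * X 5 + X 3 * X 4 * X 5,
                             X 0 * X 5 + X 1 * X 4,
                             X 1 * X 3 + X 2 * X 5}"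

lemma sum_monomials: "(\<Sum>m\<in>Poly_Mapping.keys f. Poly_Mapping.single m (Poly_Mapping.lookup f m)) = f"
  by (intro poly_mapping_eqI) (simp add: lookup_sum lookup_single when_def in_keys_iff)

lemma G_sub_Qs: "ideal_gen Igens \<subseteq> (Qs :: 'a::comm_ring_1 mpoly6 set)"
  by (rule ideal_gen_least[OF Qs_ideal]) (use gens_Qs in \<open>simp add: Igens_def\<close>)

lemma G_radical:
  fixes f :: "'a::field mpoly6"
  assumes "f \<in> radical (ideal_gen Igens)"
  shows "f \<in> ideal_gen Igens"
proof -
  let ?G = "ideal_gen Igens :: 'a mpoly6 set"
  define B where "B = {m \<in> Poly_Mapping.keys f. bad m}"
  define fb where "fb = (\<Sum>m\<in>B. Poly_Mapping.single m (Poly_Mapping.lookup f m))"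
  define fg where "fg = (\<Sum>m\<in>Poly_Mapping.keys f - B. Poly_Mapping.single m (Poly_Mapping.lookup f m))"
  have fin: "finite (Poly_Mapping.keys f)" by simp
  have "B \<subseteq> Poly_Mapping.keys f" unfolding B_def by blast
  then have "f = fg + fb"
    unfolding fg_def fb_def
    using sum.subset_diff[of B "Poly_Mapping.keys f" "\<lambda>m. Poly_Mapping.single m (Poly_Mapping.lookup f m)"] sum_monomials[of f] fin
    by simp
  then have "f = fb + fg" by (simp add: add.commute)
  have fgG: "fg \<in> ?G"
    unfolding fg_def
    by (rule ideal_sum[OF ideal_gen_ideal]) (auto simp: B_def Igens_def intro: good_term)
  have rad: "is_ideal (radical ?G)" by (rule radical_ideal[OF ideal_gen_ideal])
  have "fb = f - fg" using \<open>f = fb + fg\<close> by simp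
  then have fbR: "fb \<in> radical ?G"
    using ideal_diff[OF rad assms] fgG sub_radical[of ?G] by auto
  have "fb = 0"
  proof (rule ccontr)
    assume nz: "fb \<noteq> 0"
    obtain k where k: "fb ^ k \<in> ?G" using fbR unfolding radical_def by blast
    then have inQ: "fb ^ k \<in> Qs" using G_sub_Qs by blast
    have nzk: "fb ^ k \<noteq> 0" using nz by simp
    define M where "M = Max (Poly_Mapping.keys (fb ^ k))"
    have MK: "M \<in> Poly_Mapping.keys (fb ^ k)" unfolding M_def using nzk by simp
    have M1: "Max (Poly_Mapping.keys fb) \<in> Poly_Mapping.keys fb" using nz by simp
    have "Poly_Mapping.keys fb \<subseteq> B"
    proof
      fix x assume "x \<in> Poly_Mapping.keys fb"
      then show "x \<in> B" unfolding fb_def using keys_sum[of _ B] by (force split: if_splits)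
    qed
    then have "bad (Max (Poly_Mapping.keys fb))" using M1 unfolding B_def by blast
    then have "bad M" unfolding M_def using lead_pow[OF nz, of k] bad_mono by blast
    then show False using inQ MK unfolding Qs_def by blast
  qed
  then show ?thesis using \<open>f = fb + fg\<close> fgG by simp
qed
section \<open>Certificates\<close>

lemma half_mem:
  fixes x :: "'a::field mpoly6"
  assumes "(2::'a) \<noteq> 0" "is_ideal I" "2 * x \<in> I"
  shows "x \<in> I"
proof -
  have "Poly_Mapping.single 0 (inverse (2::'a)) * 2 = Poly_Mapping.single 0 (inverse (2::'a)) * Poly_Mapping.single 0 2"
    by simp
  also have "\<dots> = Poly_Mapping.single 0 (inverse (2::'a) * 2)" by (simp only: mult_single add_0)
  also have "\<dots> = 1" using assms(1) by simp
  finally have "x = Poly_Mapping.single 0 (inverse (2::'a)) * (2 * x)" by (metis mult.assoc mult_1_left)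
  then show ?thesis using ideal_mult[OF assms(2,3)] by metis
qed

lemma in_rad:
  fixes m :: "'a::field mpoly6"
  assumes "(2::'a) \<noteq> 0" "2 * m ^ n = h1 * g1 + h2 * g2 + h3 * g3 + h4 * g4"
    "g1 \<in> I" "g2 \<in> I" "g3 \<in> I" "g4 \<in> I" "is_ideal I"
  shows "m \<in> radical I"
proof -
  have "2 * m ^ n \<in> I" unfolding assms(2)
    using assms(3-7) by (intro ideal_add ideal_mult; simp)+
  then have "m ^ n \<in> I" by (rule half_mem[OF assms(1,7)])
  then show ?thesis unfolding radical_def by blast
qed
lemma cert0: "2 * (a * c :: 'r::comm_ring_1) ^ 2 = (- (c * e * f) + (b ^ 2)) * (a * d + c * e) + (2 * (a * c)) * (a * c + b * f + d * e * f) + (- (c * d * e) - (b * c)) * (a * f + b * e) + ((c * e ^ 2) - (a * b)) * (b * d + c * f)"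
  by (simp add: algebra_simps eval_nat_numeral)

lemma cert1: "2 * (a * d :: 'r::comm_ring_1) ^ 3 = (- (d ^ 2 * e ^ 2 * f) + (c * e * f ^ 2) - 2 * (a * c * d * e) + 2 * (a ^ 2 * d ^ 2)) * (a * d + c * e) + (2 * (c * d * e ^ 2)) * (a * c + b * f + d * e * f) + ((d ^ 3 * e ^ 2) - (c * d * e * f)) * (a * f + b * e) + (- (d ^ 2 * e ^ 3) - (c * e ^ 2 * f)) * (b * d + c * f)"
  by (simp add: algebra_simps eval_nat_numeral)

lemma cert2: "2 * (a * f :: 'r::comm_ring_1) ^ 3 = ((a * e ^ 2 * f ^ 2) - (a ^ 2 * b * e)) * (a * d + c * e) + ((a * b * e ^ 2) - (a ^ 2 * e * f)) * (a * c + b * f + d * e * f) + (- (c * e ^ 3 * f) - (b * d * e ^ 3) - (a * b * e * f) + 2 * (a ^ 2 * f ^ 2)) * (a * f + b * e) + ((b * e ^ 4) + (a ^ 3 * e)) * (b * d + c * f)"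
  by (simp add: algebra_simps eval_nat_numeral)

lemma cert3: "2 * (b * d :: 'r::comm_ring_1) ^ 3 = (- (c * d ^ 2 * f ^ 2) + (c ^ 3 * f) + 2 * (b * c ^ 2 * d)) * (a * d + c * e) + (- 2 * (b * c * d ^ 2)) * (a * c + b * f + d * e * f) + ((c * d ^ 3 * f) - (c ^ 3 * d)) * (a * f + b * e) + ((c * d ^ 2 * e * f) - (c ^ 3 * e) + 2 * (b ^ 2 * d ^ 2)) * (b * d + c * f)"
  by (simp add: algebra_simps eval_nat_numeral)

lemma cert4: "2 * (b * e :: 'r::comm_ring_1) ^ 3 = (- (a * e ^ 2 * f ^ 2) + (a ^ 2 * b * e)) * (a * d + c * e) + (- (a * b * e ^ 2) + (a ^ 2 * e * f)) * (a * c + b * f + d * e * f) + ((c * e ^ 3 * f) + (b * d * e ^ 3) + 2 * (b ^ 2 * e ^ 2) - (a * b * e * f)) * (a * f + b * e) + (- (b * e ^ 4) - (a ^ 3 * e)) * (b * d + c * f)"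
  by (simp add: algebra_simps eval_nat_numeral)

lemma cert5: "2 * (b * f :: 'r::comm_ring_1) ^ 2 = ((f ^ 3) + (b ^ 2)) * (a * d + c * e) + (2 * (b * f)) * (a * c + b * f + d * e * f) + (- (d * f ^ 2) - (b * c)) * (a * f + b * e) + (- (e * f ^ 2) - (a * b)) * (b * d + c * f)"
  by (simp add: algebra_simps eval_nat_numeral)

lemma cert6: "2 * (c * e :: 'r::comm_ring_1) ^ 3 = ((d ^ 2 * e ^ 2 * f) - (c * e * f ^ 2) + 2 * (c ^ 2 * e ^ 2)) * (a * d + c * e) + (- 2 * (c * d * e ^ 2)) * (a * c + b * f + d * e * f) + (- (d ^ 3 * e ^ 2) + (c * d * e * f)) * (a * f + b * e) + ((d ^ 2 * e ^ 3) + (c * e ^ 2 * f)) * (b * d + c * f)"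
  by (simp add: algebra_simps eval_nat_numeral)

lemma cert7: "2 * (c * f :: 'r::comm_ring_1) ^ 3 = ((c * d ^ 2 * f ^ 2) + (c ^ 3 * f)) * (a * d + c * e) + (- 2 * (c ^ 2 * d * f)) * (a * c + b * f + d * e * f) + (- (c * d ^ 3 * f) + (c ^ 3 * d)) * (a * f + b * e) + ((c * d ^ 2 * e * f) + 2 * (c ^ 2 * f ^ 2) - (c ^ 3 * e)) * (b * d + c * f)"
  by (simp add: algebra_simps eval_nat_numeral)

lemma cert8: "2 * (d * e * f :: 'r::comm_ring_1) ^ 2 = ((f ^ 3) - (c * e * f)) * (a * d + c * e) + (2 * (d * e * f)) * (a * c + b * f + d * e * f) + (- (d * f ^ 2) - (c * d * e)) * (a * f + b * e) + (- (e * f ^ 2) + (c * e ^ 2)) * (b * d + c * f)"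
  by (simp add: algebra_simps eval_nat_numeral)

theorem mainTheorem8:
  assumes "(2::'a::field) \<noteq> 0"
  shows "ideal_gen {X 0 * X 2, X 0 * X 3, X 0 * X 5, X 1 * X 3, X 1 * X 4, X 1 * X 5,
                    X 2 * X 4, X 2 * X 5, X 3 * X 4 * X 5}
       = radical (ideal_gen {X 0 * X 3 + X 2 * X 4,
                             X 0 * X 2 + X 1 * X 5 + X 3 * X 4 * X 5,
                             X 0 * X 5 + X 1 * X 4,
                             X 1 * X 3 + X 2 * X 5} :: 'a mpoly6 set)"
proof -
  let ?J = "ideal_gen Jgens :: 'a mpoly6 set"
  let ?G = "ideal_gen Igens :: 'a mpoly6 set"
  have Jid: "is_ideal ?J" by (rule ideal_gen_ideal)
  have g1: "X 0 * X 3 + X 2 * X 4 \<in> ?J" and g2: "X 0 * X 2 + X 1 * X 5 + X 3 * X 4 * X 5 \<in> ?J"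
    and g3: "X 0 * X 5 + X 1 * X 4 \<in> ?J" and g4: "X 1 * X 3 + X 2 * X 5 \<in> ?J"
    using ideal_gen_sub[of "Jgens :: 'a mpoly6 set"] unfolding Jgens_def by auto
  note R = in_rad[OF assms _ g1 g2 g3 g4 Jid]
  have "Igens \<subseteq> radical ?J"
    unfolding Igens_def
    using R[OF cert0[where a="X 0" and b="X 1" and c="X 2" and d="X 3" and e="X 4" and f="X 5"]]
      R[OF cert1[where a="X 0" and b="X 1" and c="X 2" and d="X 3" and e="X 4" and f="X 5"]]
      R[OF cert2[where a="X 0" and b="X 1" and c="X 2" and d="X 3" and e="X 4" and f="X 5"]]
      R[OF cert3[where a="X 0" and b="X 1" and c="X 2" and d="X 3" and e="X 4" and f="X 5"]]
      R[OF cert4[where a="X 0" and b="X 1" and c="X 2" and d="X 3" and e="X 4" and f="X 5"]]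
      R[OF cert5[where a="X 0" and b="X 1" and c="X 2" and d="X 3" and e="X 4" and f="X 5"]]
      R[OF cert6[where a="X 0" and b="X 1" and c="X 2" and d="X 3" and e="X 4" and f="X 5"]]
      R[OF cert7[where a="X 0" and b="X 1" and c="X 2" and d="X 3" and e="X 4" and f="X 5"]]
      R[OF cert8[where a="X 0" and b="X 1" and c="X 2" and d="X 3" and e="X 4" and f="X 5"]]
    by auto
  then have sub1: "?G \<subseteq> radical ?J"
    by (rule ideal_gen_least[OF radical_ideal[OF Jid]])
  have Gid: "is_ideal ?G" by (rule ideal_gen_ideal)
  have hI: "\<And>x. x \<in> Igens \<Longrightarrow> x \<in> ?G" using ideal_gen_sub by blast
  have e: "X 0 * X 2 \<in> ?G" "X 0 * X 3 \<in> ?G" "X 0 * X 5 \<in> ?G" "X 1 * X 3 \<in> ?G" "X 1 * X 4 \<in> ?G" "X 1 * X 5 \<in> ?G" "X 2 * X 4 \<in> ?G" "X 2 * X 5 \<in> ?G" "X 3 * X 4 * X 5 \<in> ?G"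
    by (rule hI, simp add: Igens_def)+
  have "Jgens \<subseteq> ?G"
    unfolding Jgens_def using e by (auto intro!: ideal_add[OF Gid])
  then have "?J \<subseteq> ?G" by (rule ideal_gen_least[OF Gid])
  then have "radical ?J \<subseteq> radical ?G" by (rule radical_mono)
  also have "\<dots> \<subseteq> ?G" using G_radical by blast
  finally have "?G = radical ?J" using sub1 by blast
  then show ?thesis unfolding Igens_def Jgens_def .
qed

end
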